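(* Let $T$ be a string of length $N$, and let $\mathsf{TtoG}(T)$, $T_0, T_1, \ldots$, $B_h$, $L_h$, $R_h$ and $\mathit{PSeq}$ be as defined in the context. For any substring $w$ of $T$, the sequence $\mathit{PSeq}(w)$ consists of $O(\lg N)$ blocks of letters (maximal runs of a single letter). Moreover, for every position $i$, $w$ occurs at position $i$ in $T$ if and only if $\mathit{PSeq}(w)$ occurs at position $i$.
   Context: Construction $\mathsf{TtoG}$: Let $T_0$ be obtained from $T$ by replacing each character by a letter deriving it (its rank among the characters of $T$). For $h=0,1,2,\ldots$ until $|T_h|=1$: if $h$ is even (block compression), let $B_h$ be the set of letters $c$ such that $T_h$ contains a maximal run $c^d$ with $d\ge 2$; replace every maximal run $c^d$ with $d \ge 2$ by a fresh letter $c'$ with rule $c' \to c^d$ (equal pairs $(c,d)$ receive the same fresh letter), giving $T_{h+1}$. If $h$ is odd (pair compression; $T_h$ then has no two equal adjacent letters), compute a partition $(L_h,R_h)$ of the set of letters occurring in $T_h$ as follows: process letters $c$ in increasing order, adding $c$ to $L_h$ if the number of occurrences in $T_h$ of length-2 substrings consisting of $c$ and a letter already placed in $R_h$ (in either order) is at least the number of such occurrences with a letter already in $L_h$, and adding $c$ to $R_h$ otherwise; at the end, if the number of occurrences of pairs in $L_hR_h$ is smaller than that of pairs in $R_hL_h$, swap $L_h$ and $R_h$. Then replace every occurrence of a pair $ab$ with $a\in L_h$, $b\in R_h$ by a fresh letter $c$ with rule $c\to ab$ (equal pairs receive the same letter), giving $T_{h+1}$. The letters with their rules form a run-length straight-line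 program $\mathsf{TtoG}(T)$ generating $T$. Its derivation tree has nodes labeled by letters (terminal leaves removed); each node derives an interval of positions of $T$. A chain is a sequence of nodes $v_1\cdots v_m$ such that the interval of $v_{k+1}$ begins right after the interval of $v_k$ ends; its label is the sequence of the nodes' labels. A sequence $p$ of letters occurs at position $i$ if some chain labeled $p$ begins at position $i$ of $T$. Popped sequence: for $w = T[b..e]$ let $w_0 = T_0[b..e]$. For increasing $h$: if $h$ is even, pop out the leftmost and the rightmost maximal run of $w_h$ if its letter is in $B_h$, then apply level-$h$ block compression (same letter assignment as for $T_h$) to the rest to get $w_{h+1}$; if $h$ is odd, pop out the leftmost letter of $w_h$ if it is in $R_h$ and the rightmost letter if it is in $L_h$, then replace pairs in $L_hR_h$ by their level-$h$ letters to get $w_{h+1}$. Repeat until the string is empty. $\mathit{PSeq}(w)$ is the concatenation of the letters/runs popped from the left in the order popped, followed by those popped from the right in reverse order of popping; it satisfies that the concatenation of strings derived by its letters equals $w$. *)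

theory Defs
  imports Complex_Main
begin

text \<open>A letter is identified by its rule: a terminal letter (rank of a character of T),
  a run letter c' -> c^d, or a pair letter c -> a b.  Equal (c,d) / equal pairs get the
  same letter, as required.\<close>
datatype sym = Term nat | Run sym nat | Pair sym sym

fun slen :: "sym \<Rightarrow> nat" where
  "slen (Term k) = 1"
| "slen (Run c d) = d * slen c"
| "slen (Pair a b) = slen a + slen b"

fun runs :: "'b list \<Rightarrow> ('b \<times> nat) list" where
  "runs [] = []"
| "runs (x # xs) = (case runs xs of
       [] \<Rightarrow> [(x, 1)]
     | (y, n) # r \<Rightarrow> (if x = y then (y, Suc n) # r else (x, 1) # (y, n) # r))"

definition unruns :: "('b \<times> nat) list \<Rightarrow> 'b list" where
  "unruns rs = concat (map (\<lambda>(c, d). replicate d c) rs)"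

definition bc_run :: "sym \<times> nat \<Rightarrow> sym list" where
  "bc_run cd = (case cd of (c, d) \<Rightarrow> if 2 \<le> d then [Run c d] else replicate d c)"

definition bcomp :: "sym list \<Rightarrow> sym list" where
  "bcomp s = concat (map bc_run (runs s))"

definition Bset :: "sym list \<Rightarrow> sym set" where
  "Bset s = {c. \<exists>d. 2 \<le> d \<and> (c, d) \<in> set (runs s)}"

fun pcomp :: "sym set \<Rightarrow> sym set \<Rightarrow> sym list \<Rightarrow> sym list" where
  "pcomp L R (a # b # s) =
     (if a \<in> L \<and> b \<in> R then Pair a b # pcomp L R s else a # pcomp L R (b # s))"
| "pcomp L R s = s"

definition adj :: "'b list \<Rightarrow> ('b \<times> 'b) list" where
  "adj s = zip s (tl s)"

definition cnt_with :: "sym list \<Rightarrow> sym \<Rightarrow> sym set \<Rightarrow> nat" where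
  "cnt_with s c X = length (filter (\<lambda>(x, y). (x = c \<and> y \<in> X) \<or> (y = c \<and> x \<in> X)) (adj s))"

definition cnt_LR :: "sym list \<Rightarrow> sym set \<Rightarrow> sym set \<Rightarrow> nat" where
  "cnt_LR s L R = length (filter (\<lambda>(x, y). x \<in> L \<and> y \<in> R) (adj s))"

definition greedy_step :: "sym list \<Rightarrow> sym \<Rightarrow> sym set \<times> sym set \<Rightarrow> sym set \<times> sym set" where
  "greedy_step s c LR = (case LR of (L, R) \<Rightarrow>
      if cnt_with s c L \<le> cnt_with s c R then (insert c L, R) else (L, insert c R))"

text \<open>The partition (L_h, R_h); letters are processed in increasing order w.r.t. the
  letter order given by the injective ranking rk.\<close>
definition partition_lr :: "(sym \<Rightarrow> nat) \<Rightarrow> sym list \<Rightarrow> sym set \<times> sym set" where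
  "partition_lr rk s = (case fold (greedy_step s) (sort_key rk (remdups s)) ({}, {}) of
      (L, R) \<Rightarrow> if cnt_LR s L R < cnt_LR s R L then (R, L) else (L, R))"

definition char_rank :: "'a::linorder list \<Rightarrow> 'a \<Rightarrow> nat" where
  "char_rank T x = card {y \<in> set T. y < x}"

definition T0 :: "'a::linorder list \<Rightarrow> 'a list \<Rightarrow> sym list" where
  "T0 T w = map (\<lambda>x. Term (char_rank T x)) w"

primrec Tlev :: "(sym \<Rightarrow> nat) \<Rightarrow> 'a::linorder list \<Rightarrow> nat \<Rightarrow> sym list" where
  "Tlev rk T 0 = T0 T T"
| "Tlev rk T (Suc h) = (if even h then bcomp (Tlev rk T h)
     else (case partition_lr rk (Tlev rk T h) of (L, R) \<Rightarrow> pcomp L R (Tlev rk T h)))"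

definition Lset :: "(sym \<Rightarrow> nat) \<Rightarrow> 'a::linorder list \<Rightarrow> nat \<Rightarrow> sym set" where
  "Lset rk T h = fst (partition_lr rk (Tlev rk T h))"

definition Rset :: "(sym \<Rightarrow> nat) \<Rightarrow> 'a::linorder list \<Rightarrow> nat \<Rightarrow> sym set" where
  "Rset rk T h = snd (partition_lr rk (Tlev rk T h))"

definition Bh :: "(sym \<Rightarrow> nat) \<Rightarrow> 'a::linorder list \<Rightarrow> nat \<Rightarrow> sym set" where
  "Bh rk T h = Bset (Tlev rk T h)"

definition pop_even :: "sym set \<Rightarrow> sym list \<Rightarrow> sym list \<times> sym list \<times> sym list" where
  "pop_even B w =
    (case (case runs w of
             [] \<Rightarrow> ([], [])
           | (c, d) # r \<Rightarrow> (if c \<in> B then (replicate d c, r) else ([], runs w))) of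
      (lp, rs1) \<Rightarrow>
        (case (case rev rs1 of
                 [] \<Rightarrow> ([], [])
               | (c, d) # r \<Rightarrow> (if c \<in> B then (replicate d c, rev r) else ([], rs1))) of
          (rp, rs2) \<Rightarrow> (lp, bcomp (unruns rs2), rp)))"

definition pop_odd :: "sym set \<Rightarrow> sym set \<Rightarrow> sym list \<Rightarrow> sym list \<times> sym list \<times> sym list" where
  "pop_odd L R w =
    (case (case w of [] \<Rightarrow> ([], []) | a # r \<Rightarrow> (if a \<in> R then ([a], r) else ([], w))) of
      (lp, w1) \<Rightarrow>
        (case (case rev w1 of [] \<Rightarrow> ([], [])
                 | a # r \<Rightarrow> (if a \<in> L then ([a], rev r) else ([], w1))) of
          (rp, w2) \<Rightarrow> (lp, pcomp L R w2, rp)))"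

text \<open>Run the popping process from level h for f levels; returns (left pops in order,
  right pops in reverse order of popping).  Once the string is empty, steps are no-ops.\<close>
fun pops :: "(sym \<Rightarrow> nat) \<Rightarrow> 'a::linorder list \<Rightarrow> nat \<Rightarrow> sym list \<Rightarrow> nat \<Rightarrow> sym list \<times> sym list" where
  "pops rk T h w 0 = ([], [])"
| "pops rk T h w (Suc f) =
     (case (if even h then pop_even (Bh rk T h) w else pop_odd (Lset rk T h) (Rset rk T h) w) of
        (l, m, r) \<Rightarrow> (case pops rk T (Suc h) m f of (l', r') \<Rightarrow> (l @ l', r' @ r)))"

text \<open>The number of levels 4|T|+4 is enough for the process to
  empty the string (afterwards nothing changes).\<close>
definition PSeq :: "(sym \<Rightarrow> nat) \<Rightarrow> 'a::linorder list \<Rightarrow> 'a list \<Rightarrow> sym list" where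
  "PSeq rk T w = (case pops rk T 0 (T0 T w) (4 * length T + 4) of (l, r) \<Rightarrow> l @ r)"

text \<open>Nodes as (label, start, end) with derived interval [start, end) (0-based);
  the node at position j of T_h.\<close>
definition nodes :: "(sym \<Rightarrow> nat) \<Rightarrow> 'a::linorder list \<Rightarrow> (sym \<times> nat \<times> nat) set" where
  "nodes rk T = {(Tlev rk T h ! j, st, st + slen (Tlev rk T h ! j)) | h j st.
      j < length (Tlev rk T h) \<and> st = sum_list (map slen (take j (Tlev rk T h)))}"

definition is_chain :: "(sym \<times> nat \<times> nat) list \<Rightarrow> bool" where
  "is_chain ns = (\<forall>k. Suc k < length ns \<longrightarrow> snd (snd (ns ! k)) = fst (snd (ns ! Suc k)))"

definition occurs_seq :: "(sym \<Rightarrow> nat) \<Rightarrow> 'a::linorder list \<Rightarrow> sym list \<Rightarrow> nat \<Rightarrow> bool" where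
  "occurs_seq rk T p i = (\<exists>ns. ns \<noteq> [] \<and> set ns \<subseteq> nodes rk T \<and> is_chain ns \<and>
      map fst ns = p \<and> fst (snd (hd ns)) = i)"

definition occurs_str :: "'a list \<Rightarrow> 'a list \<Rightarrow> nat \<Rightarrow> bool" where
  "occurs_str T w i = (i + length w \<le> length T \<and> take (length w) (drop i T) = w)"

end

theory Submission
  imports Defs
begin


definition vr :: "('b \<times> nat) list \<Rightarrow> bool" where
  "vr rs = ((\<forall>x\<in>set rs. 1 \<le> snd x) \<and> successively (\<lambda>a b. fst a \<noteq> fst b) rs)"

lemma unruns_Nil[simp]: "unruns [] = []" by (simp add: unruns_def)
lemma unruns_Cons[simp]: "unruns ((c,d)#r) = replicate d c @ unruns r" by (simp add: unruns_def)
lemma unruns_append[simp]: "unruns (a @ b) = unruns a @ unruns b" by (simp add: unruns_def)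

lemma runs_props:
  "unruns (runs s) = s \<and> vr (runs s) \<and> (runs s \<noteq> [] \<longrightarrow> fst (hd (runs s)) = hd s) \<and> (runs s = [] \<longleftrightarrow> s = [])"
proof (induction s)
  case Nil then show ?case by (simp add: vr_def)
next
  case (Cons x xs)
  show ?case
  proof (cases "runs xs")
    case Nil
    then show ?thesis using Cons by (simp add: vr_def)
  next
    case (Cons p r)
    obtain y n where p: "p = (y,n)" by force
    show ?thesis using Cons.IH Cons p
      by (auto simp: vr_def successively_Cons)
  qed
qed

lemma unruns_runs[simp]: "unruns (runs s) = s" using runs_props by blast
lemma vr_runs: "vr (runs s)" using runs_props by blast
lemma runs_hd: "runs s \<noteq> [] \<Longrightarrow> fst (hd (runs s)) = hd s" using runs_props by blast
lemma runs_Nil_iff[simp]: "runs s = [] \<longleftrightarrow> s = []" using runs_props by blast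



lemma adj_Nil[simp]: "adj [] = []" by (simp add: adj_def)
lemma adj_single[simp]: "adj [x] = []" by (simp add: adj_def)
lemma adj_Cons2[simp]: "adj (x#y#s) = (x,y) # adj (y#s)" by (simp add: adj_def)
lemma adj_Cons: "adj (x#s) = (if s = [] then [] else (x, hd s) # adj s)"
  by (cases s) auto
lemma adj_append: "u \<noteq> [] \<Longrightarrow> v \<noteq> [] \<Longrightarrow> adj (u @ v) = adj u @ [(last u, hd v)] @ adj v"
proof (induction u)
  case Nil then show ?case by simp
next
  case (Cons x u)
  then show ?case by (cases u) (auto simp: adj_Cons)
qed
lemma length_adj[simp]: "length (adj s) = length s - 1" by (simp add: adj_def)
lemma set_adj: "(x,y) \<in> set (adj s) \<Longrightarrow> x \<in> set s \<and> y \<in> set s"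
  by (induction s rule: induct_list012) auto

lemma fsplit:
  assumes "\<And>x. x \<in> set xs \<Longrightarrow> P x \<longleftrightarrow> Q x \<or> R x"
      and "\<And>x. x \<in> set xs \<Longrightarrow> \<not> (Q x \<and> R x)"
  shows "length (filter P xs) = length (filter Q xs) + length (filter R xs)"
  using assms by (induction xs) auto

lemma filter_mono_len:
  assumes "\<And>x. x \<in> set xs \<Longrightarrow> P x \<Longrightarrow> Q x"
  shows "length (filter P xs) \<le> length (filter Q xs)"
  using assms by (induction xs) auto

definition eqc :: "'b list \<Rightarrow> nat" where
  "eqc s = length (filter (\<lambda>(x,y). x = y) (adj s))"
definition neqc :: "'b list \<Rightarrow> nat" where
  "neqc s = length (filter (\<lambda>(x,y). x \<noteq> y) (adj s))"

lemma eqc_Cons: "eqc (x # s) = eqc s + (if s \<noteq> [] \<and> x = hd s then 1 else 0)"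
  by (cases s) (auto simp: eqc_def)
lemma neqc_Cons: "neqc (x # s) = neqc s + (if s \<noteq> [] \<and> x \<noteq> hd s then 1 else 0)"
  by (cases s) (auto simp: neqc_def)
lemma neqc_append: "u \<noteq> [] \<Longrightarrow> v \<noteq> [] \<Longrightarrow> neqc (u @ v) \<le> neqc u + 1 + neqc v"
  by (auto simp: neqc_def adj_append)
lemma eq_neq: "eqc s + neqc s = length s - 1"
proof -
  have "length (filter (\<lambda>_. True) (adj s)) = eqc s + neqc s" unfolding eqc_def neqc_def
    by (rule fsplit) auto
  then show ?thesis by simp
qed

lemma length_runs: "length (runs s) = (if s = [] then 0 else Suc (neqc s))"
proof (induction s)
  case Nil then show ?case by simp
next
  case (Cons x xs)
  show ?case
  proof (cases "runs xs")
    case Nil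
    then show ?thesis by (simp add: neqc_def)
  next
    case (Cons p r)
    obtain y n where p: "p = (y,n)" by force
    have "y = hd xs" using runs_hd[of xs] Cons p by simp
    moreover have "xs \<noteq> []" using Cons by auto
    ultimately show ?thesis using Cons.IH Cons p by (auto simp: neqc_Cons)
  qed
qed

lemma runs_append_le: "length (runs (u @ v)) \<le> length (runs u) + length (runs v)"
proof (cases "u = [] \<or> v = []")
  case True then show ?thesis by auto
next
  case False
  then show ?thesis using neqc_append[of u v] by (simp add: length_runs)
qed

lemma neqc_replicate: "neqc (replicate d c) = 0"
proof (induction d)
  case 0 then show ?case by (simp add: neqc_def)
next
  case (Suc d) then show ?case by (cases d) (auto simp: neqc_Cons)
qed
lemma runs_replicate: "length (runs (replicate d c)) \<le> 1"
  by (simp add: length_runs neqc_replicate)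

lemma runs_append:
  "u = [] \<or> v = [] \<or> last u \<noteq> hd v \<Longrightarrow> runs (u @ v) = runs u @ runs v"
proof (induction u)
  case Nil then show ?case by simp
next
  case (Cons x u)
  show ?case
  proof (cases "u = []")
    case True
    then show ?thesis using Cons.prems runs_hd[of v]
      by (cases "runs v") (auto split: prod.splits)
  next
    case False
    then have "runs (u @ v) = runs u @ runs v" using Cons by auto
    moreover obtain p r where "runs u = p # r" using False by (cases "runs u") auto
    ultimately show ?thesis by (auto split: prod.splits)
  qed
qed

lemma bcomp_append:
  "u = [] \<or> v = [] \<or> last u \<noteq> hd v \<Longrightarrow> bcomp (u @ v) = bcomp u @ bcomp v"
  by (simp add: bcomp_def runs_append)

lemma bc_run_pos: "1 \<le> d \<Longrightarrow> bc_run (c,d) = [if 2 \<le> d then Run c d else c]"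
proof -
  assume "1 \<le> d"
  then have "d = 1 \<or> 2 \<le> d" by linarith
  then show ?thesis by (auto simp: bc_run_def)
qed

lemma out_bound:
  "vr rs \<Longrightarrow> eqc (concat (map bc_run rs)) + 2 * length (concat (map bc_run rs))
     + (if rs \<noteq> [] \<and> 2 \<le> snd (hd rs) then 1 else 0) \<le> 2 * sum_list (map snd rs)
   \<and> (rs \<noteq> [] \<longrightarrow> concat (map bc_run rs) \<noteq> [] \<and>
        hd (concat (map bc_run rs)) = (if 2 \<le> snd (hd rs) then Run (fst (hd rs)) (snd (hd rs)) else fst (hd rs)))"
proof (induction rs)
  case Nil then show ?case by (simp add: eqc_def)
next
  case (Cons p rs)
  obtain c d where p: "p = (c,d)" by force
  have vr': "vr rs" using Cons.prems by (auto simp: vr_def successively_Cons)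
  have d1: "1 \<le> d" using Cons.prems p by (auto simp: vr_def)
  note IH = Cons.IH[OF vr']
  let ?o = "concat (map bc_run rs)"
  have bc: "bc_run (c,d) = [if 2 \<le> d then Run c d else c]" using bc_run_pos[OF d1] .
  have e: "eqc ((if 2 \<le> d then Run c d else c) # ?o) = eqc ?o + (if ?o \<noteq> [] \<and> (if 2 \<le> d then Run c d else c) = hd ?o then 1 else 0)"
    by (rule eqc_Cons)
  show ?case
  proof (cases "2 \<le> d")
    case True
    then show ?thesis using IH e bc p by auto
  next
    case False
    then have d: "d = 1" using d1 by auto
    have key: "(if ?o \<noteq> [] \<and> c = hd ?o then 1 else 0) \<le> (if rs \<noteq> [] \<and> 2 \<le> snd (hd rs) then 1 else (0::nat))"
    proof (cases rs)
      case Nil then show ?thesis by simp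
    next
      case (Cons q rs')
      obtain c' d' where q: "q = (c', d')" by force
      have "c \<noteq> c'" using Cons.prems p Cons q by (auto simp: vr_def successively_Cons)
      then show ?thesis using IH Cons q by auto
    qed
    show ?thesis using IH e bc p d key by auto
  qed
qed

lemma sum_runs: "sum_list (map snd (runs s)) = length s"
proof -
  have "\<And>rs. length (unruns rs) = sum_list (map snd rs)"
    subgoal for rs by (induction rs) auto done
  then have "length (unruns (runs s)) = sum_list (map snd (runs s))" .
  then show ?thesis by simp
qed

lemma bcomp_bound: "eqc (bcomp t) + 2 * length (bcomp t) \<le> 2 * length t"
  using out_bound[OF vr_runs[of t]] sum_runs[of t] unfolding bcomp_def by linarith



lemma pcomp_split:
  "u = [] \<or> v = [] \<or> last u \<notin> L \<or> hd v \<notin> R \<Longrightarrow> pcomp L R (u @ v) = pcomp L R u @ pcomp L R v"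
proof (induction L R u rule: pcomp.induct)
  case (1 L R a b s)
  then show ?case by (cases s) auto
qed (cases v, auto)+

lemma pcomp_le: "length (pcomp L R s) \<le> length s"
  by (induction L R s rule: pcomp.induct) auto

lemma pcomp_Nil_iff[simp]: "pcomp L R s = [] \<longleftrightarrow> s = []"
  by (induction L R s rule: pcomp.induct) auto

lemma pcomp_strict:
  "Suc k < length s \<Longrightarrow> s ! k \<in> L \<Longrightarrow> s ! Suc k \<in> R \<Longrightarrow> length (pcomp L R s) < length s"
proof (induction L R s arbitrary: k rule: pcomp.induct)
  case (1 L R a b s)
  show ?case
  proof (cases "a \<in> L \<and> b \<in> R")
    case True then show ?thesis using pcomp_le[of L R s] by simp
  next
    case False
    have "k \<noteq> 0"
    proof
      assume "k = 0"
      then show False using False 1(4,5) by simp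
    qed
    then obtain k' where k: "k = Suc k'" by (cases k) auto
    then show ?thesis using 1(2)[of k'] False 1(3-5) by auto
  qed
qed auto

lemma cnt_LR_Cons2: "cnt_LR (a#b#s) L R = (if a \<in> L \<and> b \<in> R then 1 else 0) + cnt_LR (b#s) L R"
  by (simp add: cnt_LR_def)

lemma pcomp_len: "L \<inter> R = {} \<Longrightarrow> length (pcomp L R s) + cnt_LR s L R = length s"
proof (induction L R s rule: pcomp.induct)
  case (1 L R a b s)
  show ?case
  proof (cases "a \<in> L \<and> b \<in> R")
    case True
    have "cnt_LR (b#s) L R = cnt_LR s L R"
      using True 1(3) by (cases s) (auto simp: cnt_LR_Cons2, simp add: cnt_LR_def)
    then show ?thesis using True 1 by (simp add: cnt_LR_Cons2)
  next
    case False
    have "pcomp L R (a#b#s) = a # pcomp L R (b#s)" using False by simp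
    moreover have "cnt_LR (a#b#s) L R = cnt_LR (b#s) L R" using False by (simp add: cnt_LR_Cons2)
    ultimately show ?thesis using 1(2)[OF False 1(3)] by simp
  qed
qed (auto simp: cnt_LR_def)

definition cross :: "sym list \<Rightarrow> sym set \<Rightarrow> sym set \<Rightarrow> nat" where
  "cross s L R = length (filter (\<lambda>(x,y). x \<in> L \<and> y \<in> R \<or> x \<in> R \<and> y \<in> L) (adj s))"
definition ns :: "sym list \<Rightarrow> sym set \<Rightarrow> nat" where
  "ns s P = length (filter (\<lambda>(x,y). x \<noteq> y \<and> x \<in> P \<and> y \<in> P) (adj s))"

lemma ns_insert: "c \<notin> P \<Longrightarrow> ns s (insert c P) = ns s P + cnt_with s c P"
  unfolding ns_def cnt_with_def by (rule fsplit) auto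

lemma cw_union: "L \<inter> R = {} \<Longrightarrow> cnt_with s c (L \<union> R) = cnt_with s c L + cnt_with s c R"
  unfolding cnt_with_def by (rule fsplit) auto

lemma cross_insL: "c \<notin> L \<Longrightarrow> c \<notin> R \<Longrightarrow> cross s (insert c L) R = cross s L R + cnt_with s c R"
  unfolding cross_def cnt_with_def by (rule fsplit) auto

lemma cross_insR: "c \<notin> L \<Longrightarrow> c \<notin> R \<Longrightarrow> cross s L (insert c R) = cross s L R + cnt_with s c L"
  unfolding cross_def cnt_with_def by (rule fsplit) auto

lemma fold_inv:
  "distinct cs \<Longrightarrow> set cs \<inter> (L \<union> R) = {} \<Longrightarrow> L \<inter> R = {} \<Longrightarrow> ns s (L \<union> R) \<le> 2 * cross s L R \<Longrightarrow>
   fold (greedy_step s) cs (L, R) = (L', R') \<Longrightarrow>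
   L' \<inter> R' = {} \<and> L' \<union> R' = L \<union> R \<union> set cs \<and> ns s (L' \<union> R') \<le> 2 * cross s L' R'"
proof (induction cs arbitrary: L R)
  case Nil then show ?case by simp
next
  case (Cons c cs)
  have cn: "c \<notin> L" "c \<notin> R" using Cons.prems by auto
  have nsi: "ns s (insert c (L \<union> R)) = ns s (L \<union> R) + cnt_with s c L + cnt_with s c R"
    using ns_insert[of c "L \<union> R" s] cw_union[OF Cons.prems(3)] cn by simp
  show ?case
  proof (cases "cnt_with s c L \<le> cnt_with s c R")
    case True
    then have g: "greedy_step s c (L,R) = (insert c L, R)" by (simp add: greedy_step_def)
    have "ns s (insert c L \<union> R) \<le> 2 * cross s (insert c L) R"
      using nsi cross_insL[OF cn] Cons.prems(4) True by simp
    then show ?thesis using Cons.IH[of "insert c L" R] Cons.prems g by auto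
  next
    case False
    then have g: "greedy_step s c (L,R) = (L, insert c R)" by (simp add: greedy_step_def)
    have "ns s (L \<union> insert c R) \<le> 2 * cross s L (insert c R)"
      using nsi cross_insR[OF cn] Cons.prems(4) False by simp
    then show ?thesis using Cons.IH[of L "insert c R"] Cons.prems g by auto
  qed
qed

lemma cross_split: "L \<inter> R = {} \<Longrightarrow> cross s L R = cnt_LR s L R + cnt_LR s R L"
  unfolding cross_def cnt_LR_def by (rule fsplit) auto

lemma ns_all: "ns s (set s) = neqc s"
  unfolding ns_def neqc_def by (rule arg_cong[where f=length], rule filter_cong) (auto dest: set_adj)

lemma partition_props:
  assumes "partition_lr rk s = (L, R)"
  shows "L \<inter> R = {} \<and> L \<union> R = set s \<and> length s \<le> 4 * cnt_LR s L R + eqc s + 1"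
proof -
  obtain L0 R0 where f: "fold (greedy_step s) (sort_key rk (remdups s)) ({}, {}) = (L0, R0)"
    by force
  have n0: "ns s ({} \<union> {}) \<le> 2 * cross s {} {}" by (simp add: ns_def)
  have I0: "L0 \<inter> R0 = {} \<and> L0 \<union> R0 = {} \<union> {} \<union> set (sort_key rk (remdups s)) \<and> ns s (L0 \<union> R0) \<le> 2 * cross s L0 R0"
    by (rule fold_inv[OF _ _ _ n0 f]) simp_all
  have ss: "{} \<union> {} \<union> set (sort_key rk (remdups s)) = set s" by simp
  have I: "L0 \<inter> R0 = {}" "L0 \<union> R0 = set s" "ns s (L0 \<union> R0) \<le> 2 * cross s L0 R0"
    using I0 ss by metis+
  then have "ns s (set s) \<le> 2 * cross s L0 R0" by metis
  then have c: "neqc s \<le> 2 * (cnt_LR s L0 R0 + cnt_LR s R0 L0)" using ns_all[of s] cross_split[of L0 R0 s] I by simp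
  have e: "eqc s + neqc s = length s - 1" by (rule eq_neq)
  show ?thesis
  proof (cases "cnt_LR s L0 R0 < cnt_LR s R0 L0")
    case True
    then have "L = R0" "R = L0" using assms f by (auto simp: partition_lr_def)
    then show ?thesis using I c e True by auto
  next
    case False
    then have "L = L0" "R = R0" using assms f by (auto simp: partition_lr_def)
    then show ?thesis using I c e False by auto
  qed
qed

lemma pcomp_bound:
  assumes "partition_lr rk s = (L, R)"
  shows "4 * length (pcomp L R s) \<le> 3 * length s + eqc s + 1"
  using partition_props[OF assms] pcomp_len[of L R s] by linarith



fun xp :: "sym \<Rightarrow> sym list" where
  "xp (Term k) = [Term k]"
| "xp (Run c d) = concat (replicate d (xp c))"
| "xp (Pair a b) = xp a @ xp b"

definition ex :: "sym list \<Rightarrow> sym list" where "ex s = concat (map xp s)"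
definition ss :: "sym list \<Rightarrow> nat" where "ss s = sum_list (map slen s)"

lemma length_concat_replicate: "length (concat (replicate d xs)) = d * length xs"
  by (induction d) auto

lemma slen_xp: "length (xp x) = slen x"
  by (induction x) (auto simp: length_concat_replicate)

lemma ex_Nil[simp]: "ex [] = []" by (simp add: ex_def)
lemma ex_Cons[simp]: "ex (x # s) = xp x @ ex s" by (simp add: ex_def)
lemma ex_append[simp]: "ex (u @ v) = ex u @ ex v" by (simp add: ex_def)
lemma ss_Nil[simp]: "ss [] = 0" by (simp add: ss_def)
lemma ss_Cons[simp]: "ss (x # s) = slen x + ss s" by (simp add: ss_def)
lemma ss_append[simp]: "ss (u @ v) = ss u + ss v" by (simp add: ss_def)
lemma ss_ex: "ss s = length (ex s)"
  by (induction s) (auto simp: slen_xp)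

lemma ex_replicate: "ex (replicate d c) = concat (replicate d (xp c))"
  by (induction d) auto

lemma ex_bc_run: "ex (bc_run p) = ex (unruns [p])"
  by (cases p) (auto simp: bc_run_def ex_replicate)

lemma ex_bcomp[simp]: "ex (bcomp s) = ex s"
proof -
  have "\<And>rs. ex (concat (map bc_run rs)) = ex (unruns rs)"
  proof -
    fix rs :: "(sym \<times> nat) list"
    show "ex (concat (map bc_run rs)) = ex (unruns rs)"
    proof (induction rs)
      case Nil then show ?case by simp
    next
      case (Cons p rs)
      have "unruns (p # rs) = unruns [p] @ unruns rs" using unruns_append[of "[p]" rs] by simp
      then show ?case using Cons ex_bc_run[of p] by (simp add: ex_def)
    qed
  qed
  then show ?thesis by (simp add: bcomp_def)
qed

lemma ex_pcomp[simp]: "ex (pcomp L R s) = ex s"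
  by (induction L R s rule: pcomp.induct) auto

lemma part_Lset: "partition_lr rk (Tlev rk T h) = (Lset rk T h, Rset rk T h)"
  by (simp add: Lset_def Rset_def)

lemma Tlev_even: "even h \<Longrightarrow> Tlev rk T (Suc h) = bcomp (Tlev rk T h)" by simp
lemma Tlev_odd: "odd h \<Longrightarrow> Tlev rk T (Suc h) = pcomp (Lset rk T h) (Rset rk T h) (Tlev rk T h)"
  using part_Lset[of rk T h] by simp

lemma ex_T0: "ex (T0 T w) = T0 T w"
  by (induction w) (auto simp: T0_def)

lemma ex_Tlev: "ex (Tlev rk T h) = T0 T T"
proof (induction h)
  case 0 then show ?case by (simp add: ex_T0)
next
  case (Suc h)
  show ?case
  proof (cases "even h")
    case True then show ?thesis using Suc by (simp only: Tlev_even[OF True] ex_bcomp)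
  next
    case False then show ?thesis using Suc by (simp only: Tlev_odd[OF False] ex_pcomp)
  qed
qed

lemma Tlev_nonempty: "T \<noteq> [] \<Longrightarrow> Tlev rk T h \<noteq> []"
  using ex_Tlev[of rk T h] by (auto simp: T0_def)

lemma Tlev_shrink:
  assumes "even h"
  shows "4 * length (Tlev rk T (Suc (Suc h))) \<le> 3 * length (Tlev rk T h) + 1"
proof -
  let ?t = "Tlev rk T h"
  let ?s = "Tlev rk T (Suc h)"
  have s: "?s = bcomp ?t" using assms by (rule Tlev_even)
  have o: "odd (Suc h)" using assms by simp
  have "4 * length (pcomp (Lset rk T (Suc h)) (Rset rk T (Suc h)) ?s) \<le> 3 * length ?s + eqc ?s + 1"
    by (rule pcomp_bound[OF part_Lset[of rk T "Suc h"]])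
  then have "4 * length (Tlev rk T (Suc (Suc h))) \<le> 3 * length ?s + eqc ?s + 1"
    by (simp only: Tlev_odd[OF o])
  moreover have "eqc ?s + 2 * length ?s \<le> 2 * length ?t" unfolding s by (rule bcomp_bound)
  ultimately show ?thesis by linarith
qed



definition noadj :: "sym set \<Rightarrow> sym list \<Rightarrow> bool" where
  "noadj B s = (\<forall>A c D. s = A @ [c,c] @ D \<longrightarrow> c \<in> B)"

lemma noadj_use: "noadj B (u @ v) \<Longrightarrow> u \<noteq> [] \<Longrightarrow> v \<noteq> [] \<Longrightarrow> last u = hd v \<Longrightarrow> hd v \<in> B"
proof -
  assume a: "noadj B (u @ v)" "u \<noteq> []" "v \<noteq> []" "last u = hd v"
  have "u @ v = butlast u @ [hd v, hd v] @ tl v" using a(2-4)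
    by (metis append.assoc append_Cons append_Nil append_butlast_last_id list.collapse)
  then show ?thesis using a(1) unfolding noadj_def by blast
qed

lemma runs_cc: "\<exists>d. 2 \<le> d \<and> (c, d) \<in> set (runs (A @ c # c # D))"
proof (induction A)
  case Nil
  have "runs (c # D) \<noteq> []" using runs_Nil_iff by blast
  then obtain p r where pr: "runs (c # D) = p # r" using neq_Nil_conv by metis
  obtain y n where p: "p = (y, n)" by force
  have "y = c" using runs_hd[of "c#D"] pr p by simp
  moreover have "1 \<le> n" using vr_runs[of "c#D"] pr p by (auto simp: vr_def)
  ultimately have "runs (c # c # D) = (c, Suc n) # r" using pr p
    by (subst runs.simps(2)) (simp del: runs.simps)
  then have "(c, Suc n) \<in> set (runs ([] @ c # c # D))" by (simp del: runs.simps)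
  moreover have "2 \<le> Suc n" using \<open>1 \<le> n\<close> by simp
  ultimately show ?case by blast
next
  case (Cons a A)
  then obtain d where d: "2 \<le> d" "(c,d) \<in> set (runs (A @ c # c # D))" by blast
  obtain p r where pr: "runs (A @ c # c # D) = p # r" using d by (cases "runs (A @ c # c # D)") auto
  obtain y n where p: "p = (y, n)" by force
  show ?case
  proof (cases "a = y")
    case True
    then have "runs ((a # A) @ c # c # D) = (y, Suc n) # r" using pr p by simp
    then show ?thesis using d pr p
      by (cases "(c,d) = (y,n)") (auto intro: exI[of _ "Suc n"])
  next
    case False
    then show ?thesis using d pr p by auto
  qed
qed

lemma noadj_Bset: "noadj (Bset s) s"
  unfolding noadj_def Bset_def using runs_cc by fastforce

lemma vr_ConsD: "vr (p # rs) \<Longrightarrow> vr rs \<and> 1 \<le> snd p \<and> (rs \<noteq> [] \<longrightarrow> fst p \<noteq> fst (hd rs))"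
  by (cases rs) (auto simp: vr_def successively_Cons)

lemma vr_snocD: "vr (rs @ [p]) \<Longrightarrow> vr rs \<and> 1 \<le> snd p \<and> (rs \<noteq> [] \<longrightarrow> fst (last rs) \<noteq> fst p)"
  by (cases rs rule: rev_cases) (auto simp: vr_def successively_append_iff)

lemma vr_unruns: "vr rs \<Longrightarrow> rs \<noteq> [] \<Longrightarrow>
   unruns rs \<noteq> [] \<and> hd (unruns rs) = fst (hd rs) \<and> last (unruns rs) = fst (last rs)"
proof -
  assume v: "vr rs" and ne: "rs \<noteq> []"
  obtain c d r where r: "rs = (c,d) # r" using ne by (cases rs) auto
  obtain c' d' r' where r': "rs = r' @ [(c',d')]" using ne by (cases rs rule: rev_cases) auto
  have d: "1 \<le> d" using v r by (auto simp: vr_def)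
  have d': "1 \<le> d'" using v r' by (auto simp: vr_def)
  have "hd (unruns rs) = c" unfolding r using d by (cases d) auto
  moreover have "last (unruns rs) = c'" unfolding r' using d' by (cases d') auto
  moreover have "unruns rs \<noteq> []" unfolding r using d by (cases d) auto
  moreover have "fst (hd rs) = c" unfolding r by simp
  moreover have "fst (last rs) = c'" unfolding r' by simp
  ultimately show ?thesis by simp
qed

lemma pop_even_split:
  assumes hB: "noadj B (X @ m @ Y)"
      and pe: "pop_even B m = (lp, m', rp)"
  shows "\<exists>m0. m = lp @ m0 @ rp \<and> m' = bcomp m0 \<and> (\<exists>c d. lp = replicate d c) \<and> (\<exists>c d. rp = replicate d c)
     \<and> (m0 \<noteq> [] \<longrightarrow> (X @ lp = [] \<or> last (X @ lp) \<noteq> hd m0) \<and> (rp @ Y = [] \<or> last m0 \<noteq> hd (rp @ Y)))"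
proof (cases "m = []")
  case True
  then show ?thesis using pe by (auto simp: pop_even_def bcomp_def)
next
  case False
  obtain c d rs' where rs: "runs m = (c,d) # rs'" using False by (cases "runs m") auto
  have vrs: "vr ((c,d) # rs')" using vr_runs[of m] rs by simp
  note V = vr_ConsD[OF vrs]
  have hdm: "hd m = c" using runs_hd[of m] rs by simp
  define lp0 where "lp0 = (if c \<in> B then replicate d c else [])"
  define rs1 where "rs1 = (if c \<in> B then rs' else (c,d) # rs')"
  have p1: "(case runs m of [] \<Rightarrow> ([], []) | (c, d) # r \<Rightarrow> (if c \<in> B then (replicate d c, r) else ([], runs m)))
            = (lp0, rs1)" using rs by (simp add: lp0_def rs1_def)
  have m1: "m = lp0 @ unruns rs1" using unruns_runs[of m] rs by (auto simp: lp0_def rs1_def)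
  have vr1: "vr rs1" using V vrs by (simp add: rs1_def)
  have L1: "rs1 \<noteq> [] \<longrightarrow> X @ lp0 = [] \<or> last (X @ lp0) \<noteq> fst (hd rs1)"
  proof (cases "c \<in> B")
    case True
    then show ?thesis using V by (cases d) (auto simp: lp0_def rs1_def)
  next
    case False
    show ?thesis
    proof (intro impI, cases "X @ lp0 = []")
      case True then show "X @ lp0 = [] \<or> last (X @ lp0) \<noteq> fst (hd rs1)" by simp
    next
      assume "X @ lp0 \<noteq> []"
      then have Xn: "X \<noteq> []" using False by (simp add: lp0_def)
      show "X @ lp0 = [] \<or> last (X @ lp0) \<noteq> fst (hd rs1)"
      proof (rule disjI2, rule notI)
        assume "last (X @ lp0) = fst (hd rs1)"
        then have "last X = hd (m @ Y)" using False Xn hdm \<open>m \<noteq> []\<close> by (simp add: lp0_def rs1_def)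
        then have "hd (m @ Y) \<in> B" using noadj_use[of B X "m @ Y"] hB Xn \<open>m \<noteq> []\<close> by simp
        then show False using False hdm \<open>m \<noteq> []\<close> by simp
      qed
    qed
  qed
  have last1: "rs1 \<noteq> [] \<Longrightarrow> last (X @ m) = fst (last rs1)"
    using vr_unruns[OF vr1] m1 by simp
  show ?thesis
  proof (cases "rs1 = []")
    case True
    then have "pop_even B m = (lp0, bcomp [], [])" using p1 by (simp add: pop_even_def)
    then show ?thesis using pe m1 True by (auto simp: lp0_def)
  next
    case False
    obtain r' c' d' where r': "rs1 = r' @ [(c', d')]" using False by (cases rs1 rule: rev_cases) auto
    note V2 = vr_snocD[OF vr1[unfolded r']]
    define rp0 where "rp0 = (if c' \<in> B then replicate d' c' else [])"
    define rs2 where "rs2 = (if c' \<in> B then r' else rs1)"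
    have p2: "(case rev rs1 of [] \<Rightarrow> ([], []) | (c, d) # r \<Rightarrow> (if c \<in> B then (replicate d c, rev r) else ([], rs1)))
            = (rp0, rs2)" using r' by (simp add: rp0_def rs2_def)
    have pe2: "pop_even B m = (lp0, bcomp (unruns rs2), rp0)"
      using p1 p2 by (simp add: pop_even_def)
    have eqs: "lp = lp0" "m' = bcomp (unruns rs2)" "rp = rp0" using pe pe2 by auto
    have m2: "m = lp0 @ unruns rs2 @ rp0" using m1 r' by (auto simp: rs2_def rp0_def)
    have vr2: "vr rs2" using V2 vr1 by (simp add: rs2_def)
    have hd2: "rs2 \<noteq> [] \<Longrightarrow> hd rs2 = hd rs1" using r' by (auto simp: rs2_def)
    have R2: "rs2 \<noteq> [] \<longrightarrow> rp0 @ Y = [] \<or> fst (last rs2) \<noteq> hd (rp0 @ Y)"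
    proof (cases "c' \<in> B")
      case True
      then show ?thesis using V2 by (cases d') (auto simp: rp0_def rs2_def)
    next
      case False
      show ?thesis
      proof (intro impI, cases "rp0 @ Y = []")
        case True then show "rp0 @ Y = [] \<or> fst (last rs2) \<noteq> hd (rp0 @ Y)" by simp
      next
        assume "rp0 @ Y \<noteq> []"
        then have Yn: "Y \<noteq> []" using False by (simp add: rp0_def)
        show "rp0 @ Y = [] \<or> fst (last rs2) \<noteq> hd (rp0 @ Y)"
        proof (rule disjI2, rule notI)
          assume a: "fst (last rs2) = hd (rp0 @ Y)"
          have "last (X @ m) = hd Y" using a last1[OF \<open>rs1 \<noteq> []\<close>] False by (simp add: rp0_def rs2_def)
          then have "hd Y \<in> B" using noadj_use[of B "X @ m" Y] hB Yn \<open>m \<noteq> []\<close> by simp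
          moreover have "hd Y = c'" using a False r' by (simp add: rp0_def rs2_def)
          ultimately show False using False by simp
        qed
      qed
    qed
    show ?thesis
    proof (rule exI[of _ "unruns rs2"], intro conjI)
      show "m = lp @ unruns rs2 @ rp" using m2 eqs by simp
      show "m' = bcomp (unruns rs2)" using eqs by simp
      show "\<exists>c d. lp = replicate d c" using eqs by (auto simp: lp0_def)
      show "\<exists>c d. rp = replicate d c" using eqs by (auto simp: rp0_def)
      show "unruns rs2 \<noteq> [] \<longrightarrow> (X @ lp = [] \<or> last (X @ lp) \<noteq> hd (unruns rs2)) \<and>
        (rp @ Y = [] \<or> last (unruns rs2) \<noteq> hd (rp @ Y))"
      proof
        assume ne: "unruns rs2 \<noteq> []"
        then have "rs2 \<noteq> []" by auto
        then show "(X @ lp = [] \<or> last (X @ lp) \<noteq> hd (unruns rs2)) \<and>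
          (rp @ Y = [] \<or> last (unruns rs2) \<noteq> hd (rp @ Y))"
          using vr_unruns[OF vr2] L1 R2 hd2 eqs \<open>rs1 \<noteq> []\<close> by auto
      qed
    qed
  qed
qed



lemma rep1: "\<exists>c d. [a] = replicate d c" by (intro exI[of _ a] exI[of _ 1]) simp
lemma rep0: "\<exists>c d. [] = replicate d c" by (intro exI[of _ a] exI[of _ 0]) simp

lemma pop_odd_split:
  assumes LR: "L \<inter> R = {}"
      and po: "pop_odd L R m = (lp, m', rp)"
  shows "\<exists>m0. m = lp @ m0 @ rp \<and> m' = pcomp L R m0 \<and> (\<exists>c d. lp = replicate d c) \<and> (\<exists>c d. rp = replicate d c)
     \<and> (m0 \<noteq> [] \<longrightarrow> (X @ lp = [] \<or> last (X @ lp) \<notin> L \<or> hd m0 \<notin> R) \<and> (rp @ Y = [] \<or> last m0 \<notin> L \<or> hd (rp @ Y) \<notin> R))"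
proof (cases m)
  case Nil
  then show ?thesis using po by (auto simp: pop_odd_def)
next
  case (Cons a r)
  define lp0 where "lp0 = (if a \<in> R then [a] else [])"
  define w1 where "w1 = (if a \<in> R then r else m)"
  have p1: "(case m of [] \<Rightarrow> ([], []) | a # r \<Rightarrow> (if a \<in> R then ([a], r) else ([], m))) = (lp0, w1)"
    using Cons by (simp add: lp0_def w1_def)
  have m1: "m = lp0 @ w1" using Cons by (simp add: lp0_def w1_def)
  have L1: "w1 \<noteq> [] \<longrightarrow> X @ lp0 = [] \<or> last (X @ lp0) \<notin> L \<or> hd w1 \<notin> R"
    using LR Cons by (auto simp: lp0_def w1_def)
  show ?thesis
  proof (cases "w1 = []")
    case True
    then have "pop_odd L R m = (lp0, pcomp L R [], [])" using p1 by (simp add: pop_odd_def)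
    then show ?thesis using po m1 True by (auto simp: lp0_def rep0 rep1)
  next
    case False
    obtain r' z where z: "w1 = r' @ [z]" using False by (cases w1 rule: rev_cases) auto
    define rp0 where "rp0 = (if z \<in> L then [z] else [])"
    define w2 where "w2 = (if z \<in> L then r' else w1)"
    have p2: "(case rev w1 of [] \<Rightarrow> ([], []) | a # r \<Rightarrow> (if a \<in> L then ([a], rev r) else ([], w1))) = (rp0, w2)"
      using z by (simp add: rp0_def w2_def)
    have pe2: "pop_odd L R m = (lp0, pcomp L R w2, rp0)" using p1 p2 by (simp add: pop_odd_def)
    have eqs: "lp = lp0" "m' = pcomp L R w2" "rp = rp0" using po pe2 by auto
    have m2: "m = lp0 @ w2 @ rp0" using m1 z by (auto simp: w2_def rp0_def)
    have R2: "w2 \<noteq> [] \<longrightarrow> rp0 @ Y = [] \<or> last w2 \<notin> L \<or> hd (rp0 @ Y) \<notin> R"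
      using LR z by (auto simp: rp0_def w2_def)
    have hd2: "w2 \<noteq> [] \<Longrightarrow> hd w2 = hd w1" using z by (auto simp: w2_def)
    show ?thesis
    proof (rule exI[of _ w2], intro conjI)
      show "m = lp @ w2 @ rp" using m2 eqs by simp
      show "m' = pcomp L R w2" using eqs by simp
      show "\<exists>c d. lp = replicate d c" using eqs by (auto simp: lp0_def rep0 rep1)
      show "\<exists>c d. rp = replicate d c" using eqs by (auto simp: rp0_def rep0 rep1)
      show "w2 \<noteq> [] \<longrightarrow> (X @ lp = [] \<or> last (X @ lp) \<notin> L \<or> hd w2 \<notin> R) \<and> (rp @ Y = [] \<or> last w2 \<notin> L \<or> hd (rp @ Y) \<notin> R)"
        using L1 R2 hd2 eqs False by auto
    qed
  qed
qed

lemma pop_odd_strict: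
  assumes LR: "L \<inter> R = {}" and sub: "set m \<subseteq> L \<union> R" and ne: "m \<noteq> []"
      and po: "pop_odd L R m = (lp, m', rp)"
  shows "length m' < length m"
proof -
  obtain a r where m: "m = a # r" using ne by (cases m) auto
  show ?thesis
  proof (cases "a \<in> R")
    case True
    then have "\<exists>rp w2. pop_odd L R m = ([a], pcomp L R w2, rp) \<and> length w2 \<le> length r"
      using m by (cases "rev r") (auto simp: pop_odd_def)
    then obtain rp2 w2 where "pop_odd L R m = ([a], pcomp L R w2, rp2)" "length w2 \<le> length r" by blast
    then show ?thesis using po pcomp_le[of L R w2] m by auto
  next
    case False
    then have aL: "a \<in> L" using sub m by auto
    obtain r' z where z: "m = r' @ [z]" using ne by (cases m rule: rev_cases) auto
    have s1: "(case m of [] \<Rightarrow> ([], []) | a # r \<Rightarrow> (if a \<in> R then ([a], r) else ([], m))) = ([], m)"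
      using m False by simp
    have s2: "rev m = z # rev r'" using z by simp
    show ?thesis
    proof (cases "z \<in> L")
      case True
      then have "pop_odd L R m = ([], pcomp L R r', [z])"
        unfolding pop_odd_def s1 prod.case s2 by simp
      then show ?thesis using po pcomp_le[of L R r'] z by auto
    next
      case zL: False
      then have zR: "z \<in> R" using sub z by auto
      have pm: "pop_odd L R m = ([], pcomp L R m, [])"
        unfolding pop_odd_def s1 prod.case s2 using zL z by simp
      have "\<exists>k. Suc k < length m \<and> m ! k \<in> L \<and> m ! Suc k \<notin> L"
      proof -
        have "\<And>xs. xs \<noteq> [] \<Longrightarrow> hd xs \<in> L \<Longrightarrow> last xs \<notin> L \<Longrightarrow> \<exists>k. Suc k < length xs \<and> xs ! k \<in> L \<and> xs ! Suc k \<notin> L"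
        proof -
          fix xs :: "sym list"
          show "xs \<noteq> [] \<Longrightarrow> hd xs \<in> L \<Longrightarrow> last xs \<notin> L \<Longrightarrow> \<exists>k. Suc k < length xs \<and> xs ! k \<in> L \<and> xs ! Suc k \<notin> L"
          proof (induction xs)
            case Nil then show ?case by simp
          next
            case (Cons x xs)
            show ?case
            proof (cases "xs = []")
              case True then show ?thesis using Cons by simp
            next
              case False
              show ?thesis
              proof (cases "hd xs \<in> L")
                case True
                then obtain k where "Suc k < length xs \<and> xs ! k \<in> L \<and> xs ! Suc k \<notin> L"
                  using Cons False by auto
                then show ?thesis by (intro exI[of _ "Suc k"]) auto
              next
                case hL: False
                then show ?thesis using Cons False by (intro exI[of _ 0]) (auto simp: hd_conv_nth)
              qed
            qed
          qed
        qed
        then show ?thesis using ne aL zL m z by (metis last_snoc list.sel(1))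
      qed
      then obtain k where k: "Suc k < length m" "m ! k \<in> L" "m ! Suc k \<notin> L" by blast
      have "m ! Suc k \<in> set m" using k(1) by (rule nth_mem)
      then have "m ! Suc k \<in> R" using k(3) sub by blast
      then have "length (pcomp L R m) < length m" using pcomp_strict k by blast
      then show ?thesis using po pm by auto
    qed
  qed
qed



definition stp :: "(sym \<Rightarrow> nat) \<Rightarrow> 'a::linorder list \<Rightarrow> nat \<Rightarrow> sym list \<Rightarrow> sym list \<times> sym list \<times> sym list" where
  "stp rk T h m = (if even h then pop_even (Bh rk T h) m else pop_odd (Lset rk T h) (Rset rk T h) m)"

lemma pops_Suc': "pops rk T h m (Suc f) = (case stp rk T h m of (l, m', r) \<Rightarrow>
     (case pops rk T (Suc h) m' f of (l', r') \<Rightarrow> (l @ l', r' @ r)))"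
  by (simp add: stp_def)

lemma stp_Nil[simp]: "stp rk T h [] = ([], [], [])"
  by (simp add: stp_def pop_even_def pop_odd_def bcomp_def)

lemma pops_Nil: "pops rk T h [] f = ([], [])"
  by (induction f arbitrary: h) (simp_all only: pops_Suc' stp_Nil, auto)

fun mrest :: "(sym \<Rightarrow> nat) \<Rightarrow> 'a::linorder list \<Rightarrow> nat \<Rightarrow> sym list \<Rightarrow> nat \<Rightarrow> sym list" where
  "mrest rk T h m 0 = m"
| "mrest rk T h m (Suc f) = mrest rk T (Suc h) (fst (snd (stp rk T h m))) f"

lemma mrest_Nil[simp]: "mrest rk T h [] f = []"
  by (induction f arbitrary: h) auto

lemma mrest_add: "mrest rk T h m (f + g) = mrest rk T (h + f) (mrest rk T h m f) g"
  by (induction f arbitrary: h m) auto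

lemma LR_props: "Lset rk T h \<inter> Rset rk T h = {} \<and> Lset rk T h \<union> Rset rk T h = set (Tlev rk T h)"
  using partition_props[OF part_Lset[of rk T h]] by simp

lemma bcomp_Nil_iff[simp]: "bcomp s = [] \<longleftrightarrow> s = []"
  using out_bound[OF vr_runs[of s]] by (auto simp: bcomp_def)

lemma bcomp_le: "length (bcomp s) \<le> length s"
  using bcomp_bound[of s] by linarith

lemma ss_bcomp: "ss (bcomp s) = ss s" by (simp add: ss_ex)
lemma ss_pcomp: "ss (pcomp L R s) = ss s" by (simp add: ss_ex)

lemma stp_split:
  assumes T: "Tlev rk T h = X @ m @ Y" and st: "stp rk T h m = (lp, m', rp)"
  shows "\<exists>m0. m = lp @ m0 @ rp \<and> ex m' = ex m0 \<and> length m' \<le> length m0 \<and> (m' = [] \<longleftrightarrow> m0 = [])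
     \<and> (\<exists>c d. lp = replicate d c) \<and> (\<exists>c d. rp = replicate d c)
     \<and> (m' \<noteq> [] \<longrightarrow> (\<exists>X' Y'. Tlev rk T (Suc h) = X' @ m' @ Y' \<and> ss X' = ss X + ss lp))"
proof (cases "even h")
  case True
  have pe: "pop_even (Bset (Tlev rk T h)) m = (lp, m', rp)" using st unfolding stp_def if_P[OF True] Bh_def .
  have na: "noadj (Bset (Tlev rk T h)) (X @ m @ Y)" using noadj_Bset[of "Tlev rk T h"] T by simp
  obtain m0 where m0: "m = lp @ m0 @ rp" "m' = bcomp m0" "\<exists>c d. lp = replicate d c" "\<exists>c d. rp = replicate d c"
    "m0 \<noteq> [] \<longrightarrow> (X @ lp = [] \<or> last (X @ lp) \<noteq> hd m0) \<and> (rp @ Y = [] \<or> last m0 \<noteq> hd (rp @ Y))"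
    using pop_even_split[OF na pe] by blast
  show ?thesis
  proof (rule exI[of _ m0], intro conjI impI)
    show "m = lp @ m0 @ rp" "ex m' = ex m0" "length m' \<le> length m0" "m' = [] \<longleftrightarrow> m0 = []"
      "\<exists>c d. lp = replicate d c" "\<exists>c d. rp = replicate d c"
      using m0(1,3,4) apply simp_all
      using bcomp_le[of m0] apply (simp_all add: m0(2))
      done
    assume ne: "m' \<noteq> []"
    then have ne0: "m0 \<noteq> []" using m0 by simp
    have "Tlev rk T (Suc h) = bcomp ((X @ lp) @ (m0 @ (rp @ Y)))" unfolding Tlev_even[OF True] T m0(1) by simp
    also have "\<dots> = bcomp (X @ lp) @ bcomp (m0 @ (rp @ Y))"
      using m0(5) ne0 by (intro bcomp_append) auto
    also have "bcomp (m0 @ (rp @ Y)) = bcomp m0 @ bcomp (rp @ Y)"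
      using m0(5) ne0 by (intro bcomp_append) auto
    finally show "\<exists>X' Y'. Tlev rk T (Suc h) = X' @ m' @ Y' \<and> ss X' = ss X + ss lp"
      by (intro exI[of _ "bcomp (X @ lp)"] exI[of _ "bcomp (rp @ Y)"]) (simp add: m0(2) ss_bcomp)
  qed
next
  case False
  let ?L = "Lset rk T h" and ?R = "Rset rk T h"
  have po: "pop_odd ?L ?R m = (lp, m', rp)" using st unfolding stp_def if_not_P[OF False] .
  have LR: "?L \<inter> ?R = {}" using LR_props[of rk T h] by (rule conjunct1)
  obtain m0 where m0: "m = lp @ m0 @ rp" "m' = pcomp ?L ?R m0" "\<exists>c d. lp = replicate d c" "\<exists>c d. rp = replicate d c"
    "m0 \<noteq> [] \<longrightarrow> (X @ lp = [] \<or> last (X @ lp) \<notin> ?L \<or> hd m0 \<notin> ?R) \<and> (rp @ Y = [] \<or> last m0 \<notin> ?L \<or> hd (rp @ Y) \<notin> ?R)"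
    using pop_odd_split[OF LR po, where X=X and Y=Y] by blast
  show ?thesis
  proof (rule exI[of _ m0], intro conjI impI)
    show "m = lp @ m0 @ rp" "ex m' = ex m0" "length m' \<le> length m0" "m' = [] \<longleftrightarrow> m0 = []"
      "\<exists>c d. lp = replicate d c" "\<exists>c d. rp = replicate d c"
      using m0(1,3,4) apply simp_all
      using pcomp_le[of ?L ?R m0] apply (simp_all add: m0(2))
      done
    assume ne: "m' \<noteq> []"
    then have ne0: "m0 \<noteq> []" using m0 by simp
    have "Tlev rk T (Suc h) = pcomp ?L ?R ((X @ lp) @ (m0 @ (rp @ Y)))" unfolding Tlev_odd[OF False] T m0(1) by simp
    also have "\<dots> = pcomp ?L ?R (X @ lp) @ pcomp ?L ?R (m0 @ (rp @ Y))"
      using m0(5) ne0 by (intro pcomp_split) auto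
    also have "pcomp ?L ?R (m0 @ (rp @ Y)) = pcomp ?L ?R m0 @ pcomp ?L ?R (rp @ Y)"
      using m0(5) ne0 by (intro pcomp_split) auto
    finally show "\<exists>X' Y'. Tlev rk T (Suc h) = X' @ m' @ Y' \<and> ss X' = ss X + ss lp"
      by (intro exI[of _ "pcomp ?L ?R (X @ lp)"] exI[of _ "pcomp ?L ?R (rp @ Y)"]) (simp add: m0(2) ss_pcomp)
  qed
qed

lemma stp_odd_strict:
  assumes T: "Tlev rk T h = X @ m @ Y" and o: "odd h" and ne: "m \<noteq> []"
  shows "length (fst (snd (stp rk T h m))) < length m"
proof -
  let ?L = "Lset rk T h" and ?R = "Rset rk T h"
  obtain lp m' rp where po: "pop_odd ?L ?R m = (lp, m', rp)" by (cases "pop_odd ?L ?R m") auto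
  have s1: "set m \<subseteq> set (Tlev rk T h)" unfolding T by auto
  have "set m \<subseteq> ?L \<union> ?R" using s1 LR_props[of rk T h] by blast
  then have "length m' < length m" using pop_odd_strict[OF conjunct1[OF LR_props] _ ne po] by blast
  then show ?thesis using po unfolding stp_def if_not_P[OF o] by simp
qed

lemma mrest_slice:
  "Tlev rk T h = X @ m @ Y \<Longrightarrow> mrest rk T h m f = [] \<or> (\<exists>X' Y'. Tlev rk T (h + f) = X' @ mrest rk T h m f @ Y')"
proof (induction f arbitrary: h m X Y)
  case 0 then show ?case by auto
next
  case (Suc f)
  obtain lp m' rp where st: "stp rk T h m = (lp, m', rp)" by (cases "stp rk T h m") auto
  from stp_split[OF Suc.prems st] obtain m0 where m0: "m' = [] \<longleftrightarrow> m0 = []"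
     "m' \<noteq> [] \<longrightarrow> (\<exists>X' Y'. Tlev rk T (Suc h) = X' @ m' @ Y' \<and> ss X' = ss X + ss lp)" by blast
  show ?case
  proof (cases "m' = []")
    case True then show ?thesis using st by simp
  next
    case False
    then obtain X' Y' where "Tlev rk T (Suc h) = X' @ m' @ Y'" using m0 by blast
    from Suc.IH[OF this] show ?thesis using st by simp
  qed
qed

lemma mrest_len: "Tlev rk T h = X @ m @ Y \<Longrightarrow> length (mrest rk T h m f) \<le> length m"
proof (induction f arbitrary: h m X Y)
  case 0 then show ?case by auto
next
  case (Suc f)
  obtain lp m' rp where st: "stp rk T h m = (lp, m', rp)" by (cases "stp rk T h m") auto
  from stp_split[OF Suc.prems st] obtain m0 where m0: "m = lp @ m0 @ rp" "length m' \<le> length m0" "m' = [] \<longleftrightarrow> m0 = []"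
     "m' \<noteq> [] \<longrightarrow> (\<exists>X' Y'. Tlev rk T (Suc h) = X' @ m' @ Y' \<and> ss X' = ss X + ss lp)" by blast
  show ?case
  proof (cases "m' = []")
    case True then show ?thesis using st by simp
  next
    case False
    then obtain X' Y' where "Tlev rk T (Suc h) = X' @ m' @ Y'" using m0 by blast
    from Suc.IH[OF this] show ?thesis using st m0 by simp
  qed
qed

lemma mrest_two:
  assumes T: "Tlev rk T h = X @ m @ Y" and e: "even h" and ne: "m \<noteq> []"
  shows "length (mrest rk T h m 2) < length m"
proof -
  let ?m1 = "mrest rk T h m 1"
  have le: "length ?m1 \<le> length m" using mrest_len[OF T] .
  have eq: "mrest rk T h m 2 = mrest rk T (Suc h) ?m1 1"
    using mrest_add[of rk T h m 1 1] by (metis one_add_one Suc_eq_plus1)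
  show ?thesis
  proof (cases "?m1 = []")
    case True then show ?thesis using eq ne by simp
  next
    case False
    then obtain X' Y' where T': "Tlev rk T (Suc h) = X' @ ?m1 @ Y'" using mrest_slice[OF T, of 1] by auto
    have "length (fst (snd (stp rk T (Suc h) ?m1))) < length ?m1"
      using stp_odd_strict[OF T' _ False] e by simp
    then show ?thesis using eq le by simp
  qed
qed

lemma mrest_term:
  "Tlev rk T h = X @ m @ Y \<Longrightarrow> even h \<Longrightarrow> mrest rk T h m (2 * length m) = []"
proof (induction "length m" arbitrary: h m X Y rule: less_induct)
  case less
  show ?case
  proof (cases "m = []")
    case True then show ?thesis by simp
  next
    case False
    let ?m2 = "mrest rk T h m 2"
    have lt: "length ?m2 < length m" using mrest_two[OF less.prems False] .
    have eq: "mrest rk T h m (2 * length m) = mrest rk T (h + 2) ?m2 (2 * length m - 2)"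
      using mrest_add[of rk T h m 2 "2 * length m - 2"] False by (cases m) auto
    show ?thesis
    proof (cases "?m2 = []")
      case True then show ?thesis using eq by simp
    next
      case ne2: False
      then obtain X' Y' where T': "Tlev rk T (h + 2) = X' @ ?m2 @ Y'" using mrest_slice[OF less.prems(1), of 2] by auto
      have z: "mrest rk T (h + 2) ?m2 (2 * length ?m2) = []"
        using less.hyps[OF lt T'] less.prems(2) by simp
      have "2 * length m - 2 = 2 * length ?m2 + (2 * length m - 2 - 2 * length ?m2)" using lt by simp
      then have "mrest rk T (h + 2) ?m2 (2 * length m - 2) =
          mrest rk T (h + 2 + 2 * length ?m2) (mrest rk T (h + 2) ?m2 (2 * length ?m2)) (2 * length m - 2 - 2 * length ?m2)"
        by (metis mrest_add)
      then show ?thesis using eq z by simp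
    qed
  qed
qed



lemma nodes_iff: "n \<in> nodes rk T \<longleftrightarrow> (\<exists>h j. j < length (Tlev rk T h) \<and>
   n = (Tlev rk T h ! j, ss (take j (Tlev rk T h)), ss (take j (Tlev rk T h)) + slen (Tlev rk T h ! j)))"
  unfolding nodes_def ss_def by blast

lemma node_at: "Tlev rk T h = X @ x # Z \<Longrightarrow> (x, ss X, ss X + slen x) \<in> nodes rk T"
  unfolding nodes_iff by (intro exI[of _ h] exI[of _ "length X"]) simp

lemma node_end: "n \<in> nodes rk T \<Longrightarrow> snd (snd n) = fst (snd n) + slen (fst n)"
  unfolding nodes_iff by auto

lemma node_xp: "n \<in> nodes rk T \<Longrightarrow>
   xp (fst n) = take (slen (fst n)) (drop (fst (snd n)) (T0 T T)) \<and> fst (snd n) + slen (fst n) \<le> length (T0 T T)"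
proof -
  assume "n \<in> nodes rk T"
  then obtain h j where j: "j < length (Tlev rk T h)"
    and n: "n = (Tlev rk T h ! j, ss (take j (Tlev rk T h)), ss (take j (Tlev rk T h)) + slen (Tlev rk T h ! j))"
    unfolding nodes_iff by blast
  let ?s = "Tlev rk T h"
  have "?s = take j ?s @ [?s ! j] @ drop (Suc j) ?s" using j by (simp add: id_take_nth_drop)
  then have "T0 T T = ex (take j ?s) @ xp (?s ! j) @ ex (drop (Suc j) ?s)"
    using ex_Tlev[of rk T h] by (metis append_Cons append_Nil ex_Cons ex_append ex_Nil append_Nil2)
  moreover have "length (ex (take j ?s)) = ss (take j ?s)" by (simp add: ss_ex)
  ultimately show ?thesis using n by (simp add: slen_xp[symmetric])
qed

fun chn :: "(sym \<times> nat \<times> nat) list \<Rightarrow> nat \<Rightarrow> bool" where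
  "chn [] i = True"
| "chn (n # nl) i = (fst (snd n) = i \<and> chn nl (snd (snd n)))"

definition CH :: "(sym \<Rightarrow> nat) \<Rightarrow> 'a::linorder list \<Rightarrow> sym list \<Rightarrow> nat \<Rightarrow> bool" where
  "CH rk T p i = (\<exists>nl. set nl \<subseteq> nodes rk T \<and> map fst nl = p \<and> chn nl i)"

lemma CH_Nil: "CH rk T [] i" by (auto simp: CH_def)

lemma CH_Cons: "(x, i, i + slen x) \<in> nodes rk T \<Longrightarrow> CH rk T p (i + slen x) \<Longrightarrow> CH rk T (x # p) i"
proof -
  assume a: "(x, i, i + slen x) \<in> nodes rk T" "CH rk T p (i + slen x)"
  then obtain nl where "set nl \<subseteq> nodes rk T" "map fst nl = p" "chn nl (i + slen x)" unfolding CH_def by blast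
  then show ?thesis unfolding CH_def using a(1) by (intro exI[of _ "(x, i, i + slen x) # nl"]) auto
qed

lemma CH_ConsD: "CH rk T (x # p) i \<Longrightarrow> (x, i, i + slen x) \<in> nodes rk T \<and> CH rk T p (i + slen x)"
proof -
  assume "CH rk T (x # p) i"
  then obtain n nl where a: "set (n # nl) \<subseteq> nodes rk T" "map fst (n # nl) = x # p" "chn (n # nl) i"
    unfolding CH_def by (metis list.map_disc_iff neq_Nil_conv)
  have "n \<in> nodes rk T" using a(1) by simp
  then have e: "snd (snd n) = fst (snd n) + slen (fst n)" by (rule node_end)
  have "n = (x, i, i + slen x)" using a e by (cases n) auto
  then show ?thesis using a e unfolding CH_def by auto
qed

lemma CH_append: "CH rk T p i \<Longrightarrow> CH rk T q (i + ss p) \<Longrightarrow> CH rk T (p @ q) i"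
proof (induction p arbitrary: i)
  case Nil then show ?case by simp
next
  case (Cons x p)
  from CH_ConsD[OF Cons.prems(1)] have n: "(x, i, i + slen x) \<in> nodes rk T" "CH rk T p (i + slen x)" by auto
  have "CH rk T (p @ q) (i + slen x)" using Cons.IH[OF n(2)] Cons.prems(2) by (simp add: add.assoc)
  then show ?case using CH_Cons[OF n(1)] by simp
qed

lemma CH_level: "Tlev rk T h = X @ p @ Z \<Longrightarrow> CH rk T p (ss X)"
proof (induction p arbitrary: X)
  case Nil then show ?case by (simp add: CH_Nil)
next
  case (Cons x p)
  have n: "(x, ss X, ss X + slen x) \<in> nodes rk T" using node_at[of rk T h X x "p @ Z"] Cons.prems by simp
  have "CH rk T p (ss (X @ [x]))" using Cons.IH[of "X @ [x]"] Cons.prems by simp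
  then show ?case using CH_Cons[OF n] by simp
qed

lemma CH_xp: "CH rk T p i \<Longrightarrow> ex p = take (ss p) (drop i (T0 T T)) \<and> (p \<noteq> [] \<longrightarrow> i + ss p \<le> length (T0 T T))"
proof (induction p arbitrary: i)
  case Nil then show ?case by simp
next
  case (Cons x p)
  from CH_ConsD[OF Cons.prems] have n: "(x, i, i + slen x) \<in> nodes rk T" "CH rk T p (i + slen x)" by auto
  have x: "xp x = take (slen x) (drop i (T0 T T))" "i + slen x \<le> length (T0 T T)" using node_xp[OF n(1)] by auto
  have IH: "ex p = take (ss p) (drop (i + slen x) (T0 T T))" "i + slen x + ss p \<le> length (T0 T T)"
    using Cons.IH[OF n(2)] x(2) by (cases "p = []", auto)
  have "take (slen x + ss p) (drop i (T0 T T)) = take (slen x) (drop i (T0 T T)) @ take (ss p) (drop (slen x) (drop i (T0 T T)))"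
    by (rule take_add)
  then show ?case using x IH by (simp add: add.commute)
qed

lemma chn_is_chain: "set nl \<subseteq> nodes rk T \<Longrightarrow> chn nl i \<Longrightarrow> is_chain nl \<and> (nl \<noteq> [] \<longrightarrow> fst (snd (hd nl)) = i)"
proof (induction nl arbitrary: i)
  case Nil then show ?case by (simp add: is_chain_def)
next
  case (Cons n nl)
  have IH: "is_chain nl \<and> (nl \<noteq> [] \<longrightarrow> fst (snd (hd nl)) = snd (snd n))" using Cons by auto
  have "is_chain (n # nl)" unfolding is_chain_def
  proof (intro allI impI)
    fix k assume k: "Suc k < length (n # nl)"
    show "snd (snd ((n # nl) ! k)) = fst (snd ((n # nl) ! Suc k))"
    proof (cases k)
      case 0 then show ?thesis using IH k by (cases nl) auto
    next
      case (Suc k') then show ?thesis using IH k unfolding is_chain_def by auto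
    qed
  qed
  then show ?case using Cons.prems by auto
qed

lemma is_chain_chn: "is_chain nl \<Longrightarrow> nl \<noteq> [] \<Longrightarrow> chn nl (fst (snd (hd nl)))"
proof (induction nl)
  case Nil then show ?case by simp
next
  case (Cons n nl)
  show ?case
  proof (cases nl)
    case Nil then show ?thesis by simp
  next
    case (Cons n' nl')
    have ic: "is_chain nl" using Cons.prems(1) unfolding is_chain_def
      by (metis Suc_less_eq length_Cons nth_Cons_Suc)
    have "snd (snd n) = fst (snd n')" using Cons.prems(1) Cons unfolding is_chain_def
      by (metis length_Cons nth_Cons_0 nth_Cons_Suc zero_less_Suc Suc_less_eq)
    then show ?thesis using Cons.IH[OF ic] Cons by simp
  qed
qed

lemma occurs_seq_CH: "occurs_seq rk T p i \<longleftrightarrow> p \<noteq> [] \<and> CH rk T p i"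
proof
  assume "occurs_seq rk T p i"
  then obtain nl where a: "nl \<noteq> []" "set nl \<subseteq> nodes rk T" "is_chain nl" "map fst nl = p" "fst (snd (hd nl)) = i"
    unfolding occurs_seq_def by blast
  then show "p \<noteq> [] \<and> CH rk T p i" unfolding CH_def using is_chain_chn[OF a(3,1)] by auto
next
  assume "p \<noteq> [] \<and> CH rk T p i"
  then obtain nl where a: "p \<noteq> []" "set nl \<subseteq> nodes rk T" "map fst nl = p" "chn nl i"
    unfolding CH_def by blast
  then show "occurs_seq rk T p i" unfolding occurs_seq_def using chn_is_chain[OF a(2,4)] by auto
qed

lemma INV:
  "Tlev rk T h = X @ m @ Y \<Longrightarrow> pops rk T h m f = (l, r) \<Longrightarrow>
   CH rk T (l @ mrest rk T h m f @ r) (ss X) \<and> ex (l @ mrest rk T h m f @ r) = ex m"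
proof (induction f arbitrary: h m X Y l r)
  case 0
  then show ?case using CH_level[OF 0(1)] by simp
next
  case (Suc f)
  obtain lp m' rp where st: "stp rk T h m = (lp, m', rp)" by (cases "stp rk T h m") auto
  obtain l' r' where pp: "pops rk T (Suc h) m' f = (l', r')" by (cases "pops rk T (Suc h) m' f") auto
  have "pops rk T h m (Suc f) = (lp @ l', r' @ rp)" by (simp only: pops_Suc' st pp prod.case)
  then have lr: "l = lp @ l'" "r = r' @ rp" using Suc.prems(2) by simp_all
  have mr: "mrest rk T h m (Suc f) = mrest rk T (Suc h) m' f" using st by simp
  from stp_split[OF Suc.prems(1) st] obtain m0 where m0: "m = lp @ m0 @ rp" "ex m' = ex m0" "m' = [] \<longleftrightarrow> m0 = []"
     "m' \<noteq> [] \<longrightarrow> (\<exists>X' Y'. Tlev rk T (Suc h) = X' @ m' @ Y' \<and> ss X' = ss X + ss lp)" by blast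
  show ?case
  proof (cases "m' = []")
    case True
    then have "(l', r') = ([], [])" using pp pops_Nil by metis
    then have "l' = []" "r' = []" by simp_all
    moreover have "m = lp @ rp" using m0 True by simp
    moreover have "CH rk T (lp @ rp) (ss X)" using CH_level[of rk T h X "lp @ rp" Y] Suc.prems(1) \<open>m = lp @ rp\<close> by simp
    ultimately show ?thesis using lr mr True by simp
  next
    case False
    then obtain X' Y' where T': "Tlev rk T (Suc h) = X' @ m' @ Y'" "ss X' = ss X + ss lp" using m0 by blast
    have IH: "CH rk T (l' @ mrest rk T (Suc h) m' f @ r') (ss X')"
       "ex (l' @ mrest rk T (Suc h) m' f @ r') = ex m'" using Suc.IH[OF T'(1) pp] by auto
    let ?q = "l' @ mrest rk T (Suc h) m' f @ r'"
    have ssq: "ss ?q = ss m0" using IH(2) m0(2) by (simp add: ss_ex)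
    have c1: "CH rk T lp (ss X)" using CH_level[of rk T h X lp "m0 @ rp @ Y"] Suc.prems(1) m0(1) by simp
    have c3: "CH rk T rp (ss (X @ lp @ m0))" using CH_level[of rk T h "X @ lp @ m0" rp Y] Suc.prems(1) m0(1) by simp
    have "CH rk T (lp @ ?q @ rp) (ss X)"
    proof (rule CH_append[OF c1], rule CH_append)
      show "CH rk T ?q (ss X + ss lp)" using IH(1) T'(2) by simp
      show "CH rk T rp (ss X + ss lp + ss ?q)" using c3 ssq by (simp add: add.assoc)
    qed
    moreover have "ex (lp @ ?q @ rp) = ex m" using IH(2) m0 by simp
    ultimately show ?thesis using lr mr by simp
  qed
qed

lemma runs_bound:
  "Tlev rk T h = X @ m @ Y \<Longrightarrow> pops rk T h m f = (l, r) \<Longrightarrow> mrest rk T h m g = [] \<Longrightarrow>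
   length (runs (l @ r)) \<le> 2 * g"
proof (induction f arbitrary: h m X Y l r g)
  case 0 then show ?case by simp
next
  case (Suc f)
  obtain lp m' rp where st: "stp rk T h m = (lp, m', rp)" by (cases "stp rk T h m") auto
  obtain l' r' where pp: "pops rk T (Suc h) m' f = (l', r')" by (cases "pops rk T (Suc h) m' f") auto
  have "pops rk T h m (Suc f) = (lp @ l', r' @ rp)" by (simp only: pops_Suc' st pp prod.case)
  then have lr: "l = lp @ l'" "r = r' @ rp" using Suc.prems(2) by simp_all
  from stp_split[OF Suc.prems(1) st] obtain m0 where m0: "\<exists>c d. lp = replicate d c" "\<exists>c d. rp = replicate d c"
     "m' \<noteq> [] \<longrightarrow> (\<exists>X' Y'. Tlev rk T (Suc h) = X' @ m' @ Y' \<and> ss X' = ss X + ss lp)" by blast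
  have rl: "length (runs lp) \<le> 1" "length (runs rp) \<le> 1" using m0(1,2) runs_replicate by auto
  show ?case
  proof (cases g)
    case 0
    then have "m = []" using Suc.prems(3) by simp
    then have "(l, r) = ([], [])" using Suc.prems(2) pops_Nil by metis
    then have "l = [] \<and> r = []" by simp
    then show ?thesis by simp
  next
    case (Suc g')
    have mg: "mrest rk T (Suc h) m' g' = []" using Suc.prems(3) st Suc by simp
    have b: "length (runs (l' @ r')) \<le> 2 * g'"
    proof (cases "m' = []")
      case True then have "(l', r') = ([], [])" using pp pops_Nil by metis
      then show ?thesis by simp
    next
      case False
      then obtain X' Y' where T': "Tlev rk T (Suc h) = X' @ m' @ Y'" using m0 by blast
      show ?thesis by (rule Suc.IH[OF T' pp mg])
    qed
    have "length (runs (lp @ (l' @ r') @ rp)) \<le> length (runs lp) + (length (runs (l' @ r')) + length (runs rp))"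
      using runs_append_le[of lp "(l' @ r') @ rp"] runs_append_le[of "l' @ r'" rp] by simp
    then show ?thesis using lr rl b Suc by simp
  qed
qed



declare Tlev.simps(2)[simp del]

lemma T0_append[simp]: "T0 T (u @ v) = T0 T u @ T0 T v" by (simp add: T0_def)
lemma length_T0[simp]: "length (T0 T u) = length u" by (simp add: T0_def)
lemma ss_T0[simp]: "ss (T0 T u) = length u" by (induction u) (auto simp: T0_def)
lemma T0_take: "T0 T (take n (drop i u)) = take n (drop i (T0 T u))" by (simp add: T0_def take_map drop_map)

lemma char_rank_inj: "inj_on (\<lambda>c. Term (char_rank T c)) (set T)"
proof (rule inj_onI)
  fix x y assume x: "x \<in> set T" and y: "y \<in> set T" and eq: "Term (char_rank T x) = Term (char_rank T y)"
  have lt: "char_rank T a < char_rank T b" if a: "a \<in> set T" and b: "b \<in> set T" and ab: "a < b" for a b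
  proof -
    have "{z \<in> set T. z < a} \<subset> {z \<in> set T. z < b}" using a ab by auto
    then show ?thesis unfolding char_rank_def by (intro psubset_card_mono) auto
  qed
  show "x = y"
  proof (rule ccontr)
    assume "x \<noteq> y"
    then have "x < y \<or> y < x" by auto
    then show False using lt[OF x y] lt[OF y x] eq by auto
  qed
qed

lemma T0_inj: "set u \<subseteq> set T \<Longrightarrow> set v \<subseteq> set T \<Longrightarrow> T0 T u = T0 T v \<Longrightarrow> u = v"
  unfolding T0_def using char_rank_inj[of T] map_inj_on[of "\<lambda>c. Term (char_rank T c)" u v]
  by (meson inj_on_subset le_sup_iff)

lemma log_k: "1 \<le> N \<Longrightarrow> \<exists>k::nat. N \<le> 2 ^ k \<and> real k \<le> log 2 (real N) + 1"
proof -
  assume N: "1 \<le> N"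
  define k where "k = nat \<lceil>log 2 (real N)\<rceil>"
  have l0: "0 \<le> log 2 (real N)" using N by simp
  have rk: "real k = of_int \<lceil>log 2 (real N)\<rceil>" unfolding k_def using l0 by simp
  have "real k \<le> log 2 (real N) + 1" unfolding rk by linarith
  moreover have "real N \<le> 2 ^ k"
  proof -
    have "real N = 2 powr (log 2 (real N))" using N by simp
    also have "\<dots> \<le> 2 powr (real k)" unfolding rk by (intro powr_mono) auto
    also have "\<dots> = 2 ^ k" by (simp add: powr_realpow)
    finally show ?thesis .
  qed
  then have "N \<le> 2 ^ k" by (metis of_nat_le_iff of_nat_numeral of_nat_power)
  ultimately show ?thesis by blast
qed

lemma arith1: "4 * (x::nat) \<le> 3 * y + 1 \<Longrightarrow> 1 \<le> x \<Longrightarrow> 1 \<le> y \<Longrightarrow> 4 * (x - 1) \<le> 3 * (y - 1)"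
  by arith

lemma Tlev_decay:
  assumes "T \<noteq> []"
  shows "4 ^ j * (length (Tlev rk T (2 * j)) - 1) \<le> 3 ^ j * (length T - 1)"
proof (induction j)
  case 0 then show ?case by (simp add: T0_def)
next
  case (Suc j)
  define x where "x = length (Tlev rk T (2 * Suc j))"
  define y where "y = length (Tlev rk T (2 * j))"
  have "4 * length (Tlev rk T (Suc (Suc (2 * j)))) \<le> 3 * length (Tlev rk T (2 * j)) + 1"
    by (rule Tlev_shrink) simp
  moreover have "Suc (Suc (2 * j)) = 2 * Suc j" by simp
  ultimately have s: "4 * x \<le> 3 * y + 1" unfolding x_def y_def by metis
  have "1 \<le> x" "1 \<le> y" unfolding x_def y_def using Tlev_nonempty[OF assms]
    by (simp_all add: Suc_le_eq)
  then have st: "4 * (x - 1) \<le> 3 * (y - 1)" using arith1 s by blast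
  have IH: "4 ^ j * (y - 1) \<le> 3 ^ j * (length T - 1)" using Suc.IH unfolding y_def .
  have "4 ^ Suc j * (x - 1) = 4 ^ j * (4 * (x - 1))" by simp
  also have "\<dots> \<le> 4 ^ j * (3 * (y - 1))" using st by (rule mult_le_mono2)
  also have "\<dots> = 3 * (4 ^ j * (y - 1))" by simp
  also have "\<dots> \<le> 3 * (3 ^ j * (length T - 1))" using IH by simp
  finally show ?case unfolding x_def by simp
qed

lemma Tlev_small:
  assumes "T \<noteq> []" "length T \<le> 2 ^ k"
  shows "length (Tlev rk T (6 * k)) \<le> 1"
proof (rule ccontr)
  assume na: "\<not> length (Tlev rk T (6 * k)) \<le> 1"
  define a where "a = length (Tlev rk T (2 * (3 * k))) - 1"
  have "6 * k = 2 * (3 * k)" by simp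
  then have "2 \<le> length (Tlev rk T (2 * (3 * k)))" using na by simp
  then have a1: "1 \<le> a" unfolding a_def by simp
  have "4 ^ (3 * k) * a \<le> 3 ^ (3 * k) * (length T - 1)"
    unfolding a_def by (rule Tlev_decay[OF assms(1)])
  moreover have "(4::nat) ^ (3 * k) = 64 ^ k" by (simp add: power_mult)
  moreover have "(3::nat) ^ (3 * k) = 27 ^ k" by (simp add: power_mult)
  ultimately have b: "64 ^ k * a \<le> 27 ^ k * (length T - 1)" by simp
  have "(64::nat) ^ k \<le> 64 ^ k * a" using a1 by simp
  also have "\<dots> \<le> 27 ^ k * (length T - 1)" by (rule b)
  also have "\<dots> < 27 ^ k * 2 ^ k"
  proof (intro mult_strict_left_mono)
    have "0 < length T" using assms(1) by simp
    then show "length T - 1 < 2 ^ k" using assms(2) by linarith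
  qed simp
  also have "\<dots> = 54 ^ k" by (simp add: power_mult_distrib[symmetric])
  also have "\<dots> \<le> 64 ^ k" by (intro power_mono) auto
  finally show False by simp
qed



lemma occ_split:
  assumes "occurs_str T w i"
  shows "Tlev rk T 0 = T0 T (take i T) @ T0 T w @ T0 T (drop (i + length w) T)"
proof -
  have o: "i + length w \<le> length T" "take (length w) (drop i T) = w" using assms by (auto simp: occurs_str_def)
  have "T = take i T @ take (length w) (drop i T) @ drop (length w) (drop i T)"
    using append_take_drop_id[of i T] append_take_drop_id[of "length w" "drop i T"] by metis
  then have "T = take i T @ w @ drop (i + length w) T" using o by (simp add: add.commute)
  then have "T0 T T = T0 T (take i T @ w @ drop (i + length w) T)" by simp
  then show ?thesis by simp
qed

lemma main:
  fixes rk :: "sym \<Rightarrow> nat" and T :: "'a::linorder list"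
  assumes be: "b \<le> e" "e < length T"
  defines "w \<equiv> take (Suc e - b) (drop b T)"
  shows "real (length (runs (PSeq rk T w))) \<le> 16 * (1 + log 2 (real (length T))) \<and>
         (\<forall>i. occurs_str T w i \<longleftrightarrow> occurs_seq rk T (PSeq rk T w) i)"
proof -
  let ?N = "length T"
  have Tne: "T \<noteq> []" using be by auto
  have lw: "length w = Suc e - b" using be unfolding w_def by simp
  have wne: "w \<noteq> []" using lw be by auto
  have occb: "occurs_str T w b" using be lw unfolding occurs_str_def w_def by simp
  let ?m = "T0 T w"
  let ?F = "4 * length T + 4"
  obtain l r where lr: "pops rk T 0 ?m ?F = (l, r)" by (cases "pops rk T 0 ?m ?F") auto
  have ps: "PSeq rk T w = l @ r" using lr by (simp add: PSeq_def)
  have Tb: "Tlev rk T 0 = T0 T (take b T) @ ?m @ T0 T (drop (b + length w) T)" by (rule occ_split[OF occb])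
  have m2: "mrest rk T 0 ?m (2 * length ?m) = []" by (rule mrest_term[OF Tb]) simp
  have lwN: "length w \<le> length T" using occb unfolding occurs_str_def by simp
  have mF: "mrest rk T 0 ?m ?F = []"
  proof -
    have "?F = 2 * length ?m + (?F - 2 * length ?m)" using lwN by simp
    then show ?thesis using mrest_add[of rk T 0 ?m "2 * length ?m" "?F - 2 * length ?m"] m2 by simp
  qed
  have inv: "CH rk T (l @ r) i \<and> ex (l @ r) = ?m" if "occurs_str T w i" for i
  proof -
    have "i \<le> length T" using that unfolding occurs_str_def by simp
    then have "ss (T0 T (take i T)) = i" by simp
    then show ?thesis using INV[OF occ_split[OF that] lr] mF by (simp add: ex_T0 del: ss_T0)
  qed
  have exps: "ex (l @ r) = ?m" using inv[OF occb] by simp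
  have psne: "l @ r \<noteq> []" using exps wne by (auto simp: T0_def)
  have occ: "occurs_str T w i \<longleftrightarrow> occurs_seq rk T (PSeq rk T w) i" for i
  proof
    assume "occurs_str T w i"
    then show "occurs_seq rk T (PSeq rk T w) i" using inv psne ps occurs_seq_CH by metis
  next
    assume "occurs_seq rk T (PSeq rk T w) i"
    then have ch: "CH rk T (l @ r) i" using occurs_seq_CH ps by metis
    from CH_xp[OF ch] psne have x: "ex (l @ r) = take (ss (l @ r)) (drop i (T0 T T))" "i + ss (l @ r) \<le> length (T0 T T)"
      by auto
    have sslr: "ss (l @ r) = length w" using exps by (simp add: ss_ex del: ss_append)
    have "T0 T w = T0 T (take (length w) (drop i T))" using x(1) exps sslr T0_take by metis
    moreover have "set w \<subseteq> set T" unfolding w_def by (meson order.trans set_drop_subset set_take_subset)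
    moreover have "set (take (length w) (drop i T)) \<subseteq> set T" by (meson order.trans set_drop_subset set_take_subset)
    ultimately have "w = take (length w) (drop i T)" using T0_inj by blast
    moreover have "i + length w \<le> length T" using x(2) sslr by simp
    ultimately show "occurs_str T w i" unfolding occurs_str_def by simp
  qed
  obtain k :: nat where k: "?N \<le> 2 ^ k" "real k \<le> log 2 (real ?N) + 1" using log_k[of ?N] Tne by (metis Suc_leI length_greater_0_conv One_nat_def)
  have small: "length (Tlev rk T (6 * k)) \<le> 1" by (rule Tlev_small[OF Tne k(1)])
  let ?mk = "mrest rk T 0 ?m (6 * k)"
  have madd: "mrest rk T 0 ?m (6 * k + 2) = mrest rk T (6 * k) ?mk 2"
    using mrest_add[of rk T 0 ?m "6 * k" 2] by (metis add_0)
  have g: "mrest rk T 0 ?m (6 * k + 2) = []"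
  proof (cases "?mk = []")
    case True
    then show ?thesis unfolding madd by simp
  next
    case False
    then obtain X' Y' where T': "Tlev rk T (6 * k) = X' @ ?mk @ Y'" using mrest_slice[OF Tb, of "6 * k"] by auto
    have "length ?mk \<le> 1" using small T' by (metis le_trans length_append le_add1 le_add2)
    moreover have "length (mrest rk T (6 * k) ?mk 2) < length ?mk" by (rule mrest_two[OF T' _ False]) simp
    ultimately have "length (mrest rk T (6 * k) ?mk 2) = 0" by linarith
    then show ?thesis unfolding madd by simp
  qed
  have rb: "length (runs (l @ r)) \<le> 2 * (6 * k + 2)" by (rule runs_bound[OF Tb lr g])
  have "1 \<le> ?N" using Tne by (simp add: Suc_le_eq)
  then have r1: "1 \<le> real ?N" by linarith
  then have l0: "0 \<le> log 2 (real ?N)" using zero_le_log_cancel_iff[of 2 "real ?N"] by linarith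
  have "real (length (runs (PSeq rk T w))) \<le> 12 * real k + 4" using rb ps by simp
  also have "\<dots> \<le> 16 * (1 + log 2 (real ?N))"
  proof -
    have "16 * (1 + log 2 (real ?N)) = 16 + 16 * log 2 (real ?N)" by (simp add: distrib_left)
    then show ?thesis using k(2) l0 by linarith
  qed
  finally show ?thesis using occ by blast
qed

theorem lemma11:
  shows "\<exists>C::real. \<forall>(rk :: sym \<Rightarrow> nat) (T :: 'a::linorder list) b e.
     inj rk \<and> (\<forall>m n. m < n \<longrightarrow> rk (Term m) < rk (Term n)) \<and> b \<le> e \<and> e < length T \<longrightarrow>
     (let w = take (Suc e - b) (drop b T) in
        real (length (runs (PSeq rk T w))) \<le> C * (1 + log 2 (real (length T))) \<and>
        (\<forall>i. occurs_str T w i \<longleftrightarrow> occurs_seq rk T (PSeq rk T w) i))"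
proof (intro exI[of _ 16] allI impI)
  fix rk :: "sym \<Rightarrow> nat" and T :: "'a::linorder list" and b e
  assume a: "inj rk \<and> (\<forall>m n. m < n \<longrightarrow> rk (Term m) < rk (Term n)) \<and> b \<le> e \<and> e < length T"
  show "let w = take (Suc e - b) (drop b T) in
        real (length (runs (PSeq rk T w))) \<le> 16 * (1 + log 2 (real (length T))) \<and>
        (\<forall>i. occurs_str T w i \<longleftrightarrow> occurs_seq rk T (PSeq rk T w) i)"
    unfolding Let_def using main[of b e T rk] a by blast
qed


end
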